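(* Let $p,r,\ell\in\mathbb{N}$ with $1<p\leq r+1\leq\ell$, and let $x_1,\dots,x_\ell$ be arbitrary complex numbers. Then \[ \mathfrak{F}\big(\{x_j\}_{j=1}^{r}\big)\,\mathfrak{F}\big(\{x_j\}_{j=p}^{\ell}\big)-\mathfrak{F}\big(\{x_j\}_{j=1}^{\ell}\big)\,\mathfrak{F}\big(\{x_j\}_{j=p}^{r}\big) =\Big(\prod_{j=p-1}^{r}x_jx_{j+1}\Big)\,\mathfrak{F}\big(\{x_j\}_{j=1}^{p-2}\big)\,\mathfrak{F}\big(\{x_j\}_{j=r+2}^{\ell}\big). \] Moreover, if $p,r\in\mathbb{N}$ with $1<p\leq r+1$ and $\{x_j\}_{j=1}^\infty$ is a complex sequence with $\sum_{k=1}^\infty|x_kx_{k+1}|<\infty$, then \[ \mathfrak{F}\big(\{x_j\}_{j=1}^{r}\big)\,\mathfrak{F}\big(\{x_j\}_{j=p}^{\infty}\big)-\mathfrak{F}\big(\{x_j\}_{j=p}^{r}\big)\,\mathfrak{F}\big(\{x_j\}_{j=1}^{\infty}\big) =\Big(\prod_{j=p-1}^{r}x_jx_{j+1}\Big)\,\mathfrak{F}\big(\{x_j\}_{j=1}^{p-2}\big)\,\mathfrak{F}\big(\{x_j\}_{j=r+2}^{\infty}\big). \]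
   Context: For a complex sequence $x=\{x_k\}_{k=N_1}^{N_2}$ with $N_1,N_2\in\mathbb{Z}\cup\{\pm\infty\}$, $N_1\le N_2+1$ (the sequence is empty if $N_1=N_2+1$), satisfying $\sum_{k=N_1}^{N_2-1}|x_kx_{k+1}|<\infty$, define \[ \mathfrak{F}(x)=1+\sum_{m=1}^\infty(-1)^m\sum_{k\in\mathcal{I}(N_1,N_2,m)}x_{k_1}x_{k_1+1}x_{k_2}x_{k_2+1}\cdots x_{k_m}x_{k_m+1}, \] where $\mathcal{I}(N_1,N_2,m)=\{k\in\mathbb{Z}^m:\ k_{j+1}\ge k_j+2\ (1\le j\le m-1),\ N_1\le k_1,\ k_m<N_2\}$. In particular $\mathfrak{F}$ of the empty sequence equals $1$, and for a finite tuple $\mathfrak{F}(x_1,\dots,x_n)$ equals $\mathfrak{F}$ of the sequence $(x_1,\dots,x_n,0,0,\dots)$. Here $\{x_j\}_{j=a}^{b}$ with $b=a-1$ denotes the empty sequence. *)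

theory Defs
  imports "HOL-Analysis.Analysis" "HOL-Library.Extended_Nat"
begin

text \<open>Index set I(N1,N2,m): tuples k = (k_1,...,k_m) (as lists of length m) with
  k_{j+1} \<ge> k_j + 2, N1 \<le> k_1, k_m < N2.  N2 = \<infinity> encodes an infinite sequence.\<close>
definition idxI :: "nat \<Rightarrow> enat \<Rightarrow> nat \<Rightarrow> nat list set" where
  "idxI N1 N2 m = {ks. length ks = m \<and>
      (\<forall>j. Suc j < m \<longrightarrow> ks ! j + 2 \<le> ks ! Suc j) \<and>
      (0 < m \<longrightarrow> N1 \<le> ks ! 0 \<and> enat (ks ! (m - 1)) < N2)}"

text \<open>F of the sequence {x_j}_{j=N1}^{N2}.\<close>
definition frakF :: "(nat \<Rightarrow> complex) \<Rightarrow> nat \<Rightarrow> enat \<Rightarrow> complex" where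
  "frakF x N1 N2 = 1 + (\<Sum>m. (-1) ^ Suc m *
      infsum (\<lambda>ks. \<Prod>j<Suc m. x (ks ! j) * x (ks ! j + 1)) (idxI N1 N2 (Suc m)))"

end

theory Submission
  imports Defs
begin

definition sp :: "nat \<Rightarrow> enat \<Rightarrow> nat set set" where
  "sp N M = {S. finite S \<and> (\<forall>k\<in>S. N \<le> k \<and> enat k < M) \<and> (\<forall>k\<in>S. Suc k \<notin> S)}"

definition wt :: "(nat \<Rightarrow> complex) \<Rightarrow> nat set \<Rightarrow> complex" where
  "wt x S = (-1) ^ card S * (\<Prod>k\<in>S. x k * x (k+1))"

lemma idxI_gap:
  assumes "ks \<in> idxI N M m" "i < j" "j < m"
  shows "ks ! i + 2 \<le> ks ! j"
  using assms(2,3)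
proof (induction j)
  case 0 then show ?case by simp
next
  case (Suc j)
  have step: "ks ! j + 2 \<le> ks ! Suc j" using assms(1) Suc.prems by (auto simp: idxI_def)
  show ?case
  proof (cases "i = j")
    case True then show ?thesis using step by simp
  next
    case False then have "ks ! i + 2 \<le> ks ! j" using Suc by auto
    then show ?thesis using step by simp
  qed
qed

lemma idxI_props:
  assumes "ks \<in> idxI N M m"
  shows "sorted_wrt (<) ks" "length ks = m" "set ks \<in> sp N M"
proof -
  have len: "length ks = m" using assms by (simp add: idxI_def)
  show "length ks = m" by (fact len)
  show ss: "sorted_wrt (<) ks"
    unfolding sorted_wrt_iff_nth_less using idxI_gap[OF assms] len by fastforce
  have bnd: "N \<le> ks ! i \<and> enat (ks ! i) < M" if "i < m" for i
  proof -
    have m0: "0 < m" using that by simp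
    have A: "N \<le> ks ! 0" "enat (ks ! (m - 1)) < M" using assms m0 by (auto simp: idxI_def)
    have "ks ! 0 \<le> ks ! i"
      using idxI_gap[OF assms, of 0 i] that by (cases "i = 0") auto
    moreover have "ks ! i \<le> ks ! (m - 1)"
      proof (cases "i = m - 1")
      case False then have "i < m - 1" using that by simp
      then show ?thesis using idxI_gap[OF assms, of i "m - 1"] that by simp
    qed simp
    ultimately show ?thesis using A by (meson enat_ord_simps(1) le_trans order_le_less_trans)
  qed
  have sparse: "Suc k \<notin> set ks" if kin: "k \<in> set ks" for k
  proof
    assume "Suc k \<in> set ks"
    then obtain j where j: "j < m" "ks ! j = Suc k" using len by (auto simp: in_set_conv_nth)
    obtain i where i: "i < m" "ks ! i = k" using kin len by (auto simp: in_set_conv_nth)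
    show False
    proof (cases i j rule: linorder_cases)
      case less then show ?thesis using idxI_gap[OF assms less j(1)] i j by simp
    next
      case equal then show ?thesis using i j by simp
    next
      case greater then show ?thesis using idxI_gap[OF assms greater i(1)] i j by simp
    qed
  qed
  show "set ks \<in> sp N M"
    unfolding sp_def using bnd sparse len by (auto simp: in_set_conv_nth)
qed

lemma idxI_bij: "bij_betw set (idxI N M m) {S \<in> sp N M. card S = m}"
proof (rule bij_betw_imageI)
  show "inj_on set (idxI N M m)"
    by (metis idxI_props(1) inj_onI strict_sorted_equal)
  show "set ` idxI N M m = {S \<in> sp N M. card S = m}"
  proof
    show "set ` idxI N M m \<subseteq> {S \<in> sp N M. card S = m}"
      using idxI_props by (auto simp: distinct_card strict_sorted_iff)
  next
    show "{S \<in> sp N M. card S = m} \<subseteq> set ` idxI N M m"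
    proof
      fix S assume S: "S \<in> {S \<in> sp N M. card S = m}"
      define ks where "ks = sorted_list_of_set S"
      have fin: "finite S" using S by (simp add: sp_def)
      have sk: "set ks = S" "length ks = m" "sorted_wrt (<) ks"
        using S fin by (auto simp: ks_def)
      have "ks \<in> idxI N M m"
        unfolding idxI_def
      proof (intro CollectI conjI allI impI)
        show "length ks = m" by (fact sk(2))
        fix j assume j: "Suc j < m"
        have "ks ! j < ks ! Suc j" using sk j sorted_wrt_nth_less by fastforce
        moreover have i1: "ks ! j \<in> S" "ks ! Suc j \<in> S" using sk j by (metis Suc_lessD nth_mem)+
        moreover have "ks ! Suc j \<noteq> Suc (ks ! j)" using S i1 by (auto simp: sp_def)
        ultimately show "ks ! j + 2 \<le> ks ! Suc j" by simp
      next
        assume "0 < m"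
        then have "ks ! 0 \<in> S" "ks ! (m - 1) \<in> S" using sk by (metis diff_less nth_mem zero_less_one)+
        then show "N \<le> ks ! 0" "enat (ks ! (m - 1)) < M" using S by (auto simp: sp_def)
      qed
      then show "S \<in> set ` idxI N M m" using sk(1) by blast
    qed
  qed
qed

lemma sp_finite: "finite (sp N (enat l))"
proof (rule finite_subset)
  show "sp N (enat l) \<subseteq> Pow {..<l}" by (auto simp: sp_def)
qed simp

lemma norm_wt: "norm (wt x S) = (\<Prod>k\<in>S. norm (x k * x (k+1)))"
  by (simp add: wt_def norm_mult norm_power prod_norm[symmetric])

lemma wt_abs_summable:
  assumes sm: "summable (\<lambda>k. norm (x k * x (k + 1)))"
  shows "wt x summable_on sp N M"
proof -
  define b where "b k = norm (x k * x (k + 1))" for k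
  have b0: "0 \<le> b k" for k by (simp add: b_def)
  have "(\<lambda>S. norm (wt x S)) summable_on sp N M"
  proof (rule nonneg_bdd_above_summable_on)
    show "bdd_above (sum (\<lambda>S. norm (wt x S)) ` {F. F \<subseteq> sp N M \<and> finite F})"
    proof (rule bdd_aboveI2)
      fix F assume F: "F \<in> {F. F \<subseteq> sp N M \<and> finite F}"
      have finU: "finite (\<Union>F)" using F by (auto simp: sp_def)
      define L where "L = Suc (Max (insert 0 (\<Union>F)))"
      have sub: "F \<subseteq> Pow {..<L}"
      proof
        fix S assume "S \<in> F"
        then have "\<forall>k\<in>S. k \<le> Max (insert 0 (\<Union>F))" using finU by (meson Max_ge UnionI finite_insert insertCI)
        then show "S \<in> Pow {..<L}" by (auto simp: L_def less_Suc_eq_le)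
      qed
      have "(\<Sum>S\<in>F. norm (wt x S)) = (\<Sum>S\<in>F. \<Prod>k\<in>S. b k)" by (simp add: norm_wt b_def)
      also have "\<dots> \<le> (\<Sum>S\<in>Pow {..<L}. \<Prod>k\<in>S. b k)"
        by (rule sum_mono2) (use sub in \<open>auto intro: prod_nonneg b0\<close>)
      also have "\<dots> = (\<Sum>S\<in>Pow {..<L}. (\<Prod>k\<in>S. b k) * (\<Prod>k\<in>{..<L}-S. 1))" by simp
      also have "\<dots> = (\<Prod>k<L. b k + 1)" by (rule prod_add[symmetric]) simp
      also have "\<dots> \<le> (\<Prod>k<L. exp (b k))"
        by (rule prod_mono) (use b0 in \<open>auto simp: add.commute\<close>)
      also have "\<dots> = exp (\<Sum>k<L. b k)" by (simp add: exp_sum)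
      also have "\<dots> \<le> exp (suminf b)"
      proof -
        have "summable b" using sm by (simp add: b_def[abs_def])
        then have "(\<Sum>k<L. b k) \<le> suminf b" using b0 by (intro sum_le_suminf) auto
        then show ?thesis by simp
      qed
      finally show "(\<Sum>S\<in>F. norm (wt x S)) \<le> exp (suminf b)" .
    qed
  qed simp
  then show ?thesis by (rule abs_summable_summable)
qed

lemma prod_set_nth:
  assumes "distinct ks"
  shows "(\<Prod>k\<in>set ks. f k) = (\<Prod>j<length ks. f (ks ! j))"
proof -
  have "set ks = (\<lambda>j. ks ! j) ` {..<length ks}" by (auto simp: in_set_conv_nth)
  moreover have "inj_on (\<lambda>j. ks ! j) {..<length ks}" using assms by (simp add: inj_on_def nth_eq_iff_index_eq)
  ultimately show ?thesis by (simp add: prod.reindex)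
qed

lemma frakF_eq:
  assumes sm: "wt x summable_on sp N M"
  shows "frakF x N M = infsum (wt x) (sp N M)"
proof -
  define B where "B m = {S \<in> sp N M. card S = m}" for m
  define h where "h S = (card S, S)" for S :: "nat set"
  define g where "g = (\<lambda>(m::nat, S). wt x S)"
  have inj: "inj_on h (sp N M)" by (simp add: h_def inj_on_def)
  have img: "h ` sp N M = Sigma UNIV B" by (auto simp: h_def B_def image_iff)
  have gh: "g \<circ> h = wt x" by (auto simp: g_def h_def)
  have gs: "g summable_on Sigma UNIV B"
    using summable_on_reindex[OF inj, of g] sm img gh by simp
  define c where "c = (\<lambda>m. infsum (wt x) (B m))"
  have gs': "(\<lambda>(m, S). (\<lambda>m S. wt x S) m S) summable_on Sigma UNIV B" using gs by (simp add: g_def)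
  have cs: "c summable_on UNIV"
    using summable_on_Sigma_banach[OF gs'] unfolding c_def by simp
  have "infsum c UNIV = infsum (\<lambda>(m, S). wt x S) (Sigma UNIV B)"
    using infsum_Sigma'_banach[OF gs'] by (simp add: c_def)
  also have "\<dots> = infsum (wt x) (sp N M)"
    using infsum_reindex[OF inj, of g] img gh by (simp add: g_def)
  finally have ci: "infsum c UNIV = infsum (wt x) (sp N M)" .
  have csum: "c sums infsum (wt x) (sp N M)"
    using has_sum_imp_sums[OF has_sum_infsum[OF cs]] ci by simp
  have c0: "c 0 = 1"
  proof -
    have "B 0 = {{}}" by (auto simp: B_def sp_def)
    then show ?thesis by (simp add: c_def wt_def)
  qed
  have cS: "c (Suc m) = (-1) ^ Suc m *
      infsum (\<lambda>ks. \<Prod>j<Suc m. x (ks ! j) * x (ks ! j + 1)) (idxI N M (Suc m))" for m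
  proof -
    have "c (Suc m) = infsum (\<lambda>ks. wt x (set ks)) (idxI N M (Suc m))"
      unfolding c_def B_def by (rule infsum_reindex_bij_betw[OF idxI_bij, symmetric])
    also have "\<dots> = infsum (\<lambda>ks. (-1) ^ Suc m * (\<Prod>j<Suc m. x (ks ! j) * x (ks ! j + 1))) (idxI N M (Suc m))"
    proof (rule infsum_cong)
      fix ks assume ks: "ks \<in> idxI N M (Suc m)"
      have d: "distinct ks" using idxI_props(1)[OF ks] by (simp add: strict_sorted_iff)
      show "wt x (set ks) = (-1) ^ Suc m * (\<Prod>j<Suc m. x (ks ! j) * x (ks ! j + 1))"
        using idxI_props(2)[OF ks] d by (simp add: wt_def distinct_card prod_set_nth)
    qed
    also have "\<dots> = (-1) ^ Suc m * infsum (\<lambda>ks. \<Prod>j<Suc m. x (ks ! j) * x (ks ! j + 1)) (idxI N M (Suc m))"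
      by (rule infsum_cmult_right')
    finally show ?thesis .
  qed
  have "summable c" using csum by (simp add: sums_iff)
  then have "(\<Sum>m. c (Suc m)) = suminf c - c 0" by (rule suminf_split_head)
  then have "suminf c = 1 + (\<Sum>m. c (Suc m))" using c0 by simp
  then show ?thesis using csum sums_unique[OF csum] by (simp add: frakF_def cS)
qed


lemma infsum_prod_mult:
  fixes f :: "'a \<Rightarrow> complex" and g :: "'b \<Rightarrow> complex"
  assumes "(\<lambda>(a, b). f a * g b) summable_on A \<times> B"
  shows "infsum (\<lambda>(a, b). f a * g b) (A \<times> B) = infsum f A * infsum g B"
proof -
  have "infsum (\<lambda>(a, b). f a * g b) (A \<times> B) = infsum (\<lambda>a. infsum (\<lambda>b. f a * g b) B) A"
    using infsum_Sigma'_banach[of "\<lambda>a b. f a * g b" A "\<lambda>_. B"] assms by simp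
  also have "\<dots> = infsum (\<lambda>a. f a * infsum g B) A" by (simp add: infsum_cmult_right')
  also have "\<dots> = infsum f A * infsum g B" by (rule infsum_cmult_left')
  finally show ?thesis .
qed

lemma wt_union:
  assumes "finite S1" "finite S2" "S1 \<inter> S2 = {}"
  shows "wt x (S1 \<union> S2) = wt x S1 * wt x S2"
  using assms by (simp add: wt_def card_Un_disjoint prod.union_disjoint power_add)

lemma wt_insert:
  assumes "finite S" "r \<notin> S"
  shows "wt x (insert r S) = - (x r * x (r + 1)) * wt x S"
  using assms by (simp add: wt_def)

definition G :: "(nat \<Rightarrow> complex) \<Rightarrow> nat \<Rightarrow> enat \<Rightarrow> complex" where
  "G x N M = infsum (wt x) (sp N M)"

lemma recG:
  assumes Nr: "N \<le> r" and rM: "enat (Suc r) \<le> M" and sm: "wt x summable_on sp N M"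
  shows "G x N M = G x N (enat r) * G x (Suc r) M
                 - x r * x (r + 1) * G x N (enat (r - 1)) * G x (r + 2) M"
proof -
  define U where "U = (\<lambda>(S1, S2). S1 \<union> S2 :: nat set)"
  define V where "V = (\<lambda>(S1, S2). insert r (S1 \<union> S2 :: nat set))"
  define P1 where "P1 = sp N (enat r) \<times> sp (Suc r) M"
  define P2 where "P2 = sp N (enat (r - 1)) \<times> sp (r + 2) M"
  have rM': "enat r < M" using rM by (simp add: Suc_ile_eq)
  have spl: "sp N M = U ` P1 \<union> V ` P2"
  proof (rule set_eqI, rule iffI)
    fix S assume S: "S \<in> sp N M"
    define S1 where "S1 = {k\<in>S. k < r}"
    define S2 where "S2 = {k\<in>S. r < k}"
    have fS: "finite S" and bS: "\<And>k. k \<in> S \<Longrightarrow> N \<le> k \<and> enat k < M"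
      and sS: "\<And>k. k \<in> S \<Longrightarrow> Suc k \<notin> S" using S by (auto simp: sp_def)
    show "S \<in> U ` P1 \<union> V ` P2"
    proof (cases "r \<in> S")
      case False
      have "S = U (S1, S2)" using False by (auto simp: U_def S1_def S2_def) (metis linorder_neqE_nat)
      moreover have "(S1, S2) \<in> P1"
        using fS bS sS by (auto simp: P1_def sp_def S1_def S2_def)
      ultimately show ?thesis by blast
    next
      case True
      have "S = V (S1, S2)" using True by (auto simp: V_def S1_def S2_def)
      moreover have "(S1, S2) \<in> P2"
      proof -
        have "k < r - 1" if "k \<in> S" "k < r" for k
        proof -
          have "Suc k \<noteq> r" using sS[OF that(1)] True by auto
          then show ?thesis using that(2) by simp
        qed
        moreover have "r + 2 \<le> k" if "k \<in> S" "r < k" for k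
        proof -
          have "k \<noteq> Suc r" using sS True that(1) by auto
          then show ?thesis using that(2) by simp
        qed
        ultimately show ?thesis using fS bS sS by (auto simp: P2_def sp_def S1_def S2_def)
      qed
      ultimately show ?thesis by blast
    qed
  next
    fix S assume "S \<in> U ` P1 \<union> V ` P2"
    then show "S \<in> sp N M"
    proof
      assume "S \<in> U ` P1"
      then obtain S1 S2 where S: "S = S1 \<union> S2" "S1 \<in> sp N (enat r)" "S2 \<in> sp (Suc r) M"
        by (auto simp: U_def P1_def)
      then show ?thesis using Nr rM' 
        apply (auto simp: sp_def)
        apply (metis enat_ord_simps(2) order.strict_trans)
        apply fastforce
        apply fastforce
        done
    next
      assume "S \<in> V ` P2"
      then obtain S1 S2 where S: "S = insert r (S1 \<union> S2)" "S1 \<in> sp N (enat (r - 1))" "S2 \<in> sp (r + 2) M"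
        by (auto simp: V_def P2_def)
      then show ?thesis using Nr rM' 
      proof -
        have a1: "\<And>k. k \<in> S1 \<Longrightarrow> N \<le> k \<and> Suc k < r" and a1': "\<And>k. k \<in> S1 \<Longrightarrow> Suc k \<notin> S1"
          using S(2) by (auto simp: sp_def)
        have a2: "\<And>k. k \<in> S2 \<Longrightarrow> r + 2 \<le> k \<and> enat k < M" and a2': "\<And>k. k \<in> S2 \<Longrightarrow> Suc k \<notin> S2"
          using S(3) by (auto simp: sp_def)
        have fin: "finite S" using S by (simp add: sp_def)
        have "N \<le> k \<and> enat k < M" if "k \<in> S" for k
        proof -
          have "k = r \<or> k \<in> S1 \<or> k \<in> S2" using that S(1) by auto
          then show ?thesis
          proof (elim disjE)
            assume "k \<in> S1" then show ?thesis proof -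
              have "enat k < enat r" using a1[of k] \<open>k \<in> S1\<close> by simp
              then show ?thesis using a1[of k] \<open>k \<in> S1\<close> order.strict_trans[OF _ rM'] by blast
            qed
          next
            assume k: "k \<in> S2" then show ?thesis using a2[OF k] Nr by simp
          qed (use Nr rM' in auto)
        qed
        moreover have "Suc k \<notin> S" if "k \<in> S" for k
        proof -
          have "k = r \<or> k \<in> S1 \<or> k \<in> S2" using that S(1) by auto
          then show ?thesis
          proof (elim disjE)
            assume "k = r" then show ?thesis using S(1) a1[of "Suc r"] a2[of "Suc r"] by auto
          next
            assume k: "k \<in> S1" then show ?thesis using S(1) a1[OF k] a1'[OF k] a2[of "Suc k"] by auto
          next
            assume k: "k \<in> S2" then show ?thesis using S(1) a2[OF k] a2'[OF k] a1[of "Suc k"] by auto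
          qed
        qed
        ultimately show ?thesis using fin by (simp add: sp_def)
      qed
    qed
  qed
  have nU: "r \<notin> S" if "S \<in> U ` P1" for S using that by (auto simp: U_def P1_def sp_def)
  have disj: "U ` P1 \<inter> V ` P2 = {}" using nU by (auto simp: V_def)
  have recU: "fst p = {k \<in> U p. k < r} \<and> snd p = {k \<in> U p. r < k}" if "p \<in> P1" for p
    using that by (cases p) (auto simp: U_def P1_def sp_def)
  have recV: "fst p = {k \<in> V p. k < r} \<and> snd p = {k \<in> V p. r < k}" if "p \<in> P2" for p
    using that by (cases p) (auto simp: V_def P2_def sp_def)
  have injU: "inj_on U P1"
    by (rule inj_onI) (metis recU prod.expand)
  have injV: "inj_on V P2"
    by (rule inj_onI) (metis recV prod.expand)
  define h where "h = (\<lambda>(S1, S2). wt x S1 * wt x (S2::nat set))"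
  define c where "c = - (x r * x (r + 1))"
  have wU: "wt x (U p) = h p" if "p \<in> P1" for p
  proof -
    obtain S1 S2 where p: "p = (S1, S2)" by (cases p)
    have f: "finite S1" "finite S2" "\<forall>k\<in>S1. k < r" "\<forall>k\<in>S2. r < k" using that p
      by (auto simp: P1_def sp_def)
    then have "S1 \<inter> S2 = {}" by (meson disjoint_iff order.asym)
    then show ?thesis using f by (simp add: p U_def h_def wt_union)
  qed
  have wV: "wt x (V p) = c * h p" if "p \<in> P2" for p
  proof -
    obtain S1 S2 where p: "p = (S1, S2)" by (cases p)
    have f: "finite S1" "finite S2" "\<forall>k\<in>S1. k < r" "\<forall>k\<in>S2. r < k" using that p
      by (auto simp: P2_def sp_def)
    then have "S1 \<inter> S2 = {}" "r \<notin> S1 \<union> S2" by (meson disjoint_iff order.asym, blast)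
    then show ?thesis using f by (simp add: p V_def h_def c_def wt_insert wt_union)
  qed
  have s1: "wt x summable_on U ` P1" by (rule summable_on_subset_banach[OF sm]) (simp add: spl)
  have s2: "wt x summable_on V ` P2" by (rule summable_on_subset_banach[OF sm]) (simp add: spl)
  have eU: "infsum (wt x) (U ` P1) = infsum h P1"
  proof -
    have "infsum (wt x) (U ` P1) = infsum (wt x \<circ> U) P1" by (rule infsum_reindex[OF injU])
    also have "\<dots> = infsum h P1" by (rule infsum_cong) (simp add: wU)
    finally show ?thesis .
  qed
  have eV: "infsum (wt x) (V ` P2) = c * infsum h P2"
  proof -
    have "infsum (wt x) (V ` P2) = infsum (wt x \<circ> V) P2" by (rule infsum_reindex[OF injV])
    also have "\<dots> = infsum (\<lambda>p. c * h p) P2" by (rule infsum_cong) (simp add: wV)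
    also have "\<dots> = c * infsum h P2" by (rule infsum_cmult_right')
    finally show ?thesis .
  qed
  have sU: "h summable_on P1"
  proof -
    have a: "(wt x \<circ> U) summable_on P1" using summable_on_reindex[OF injU, THEN iffD1, OF s1] .
    have "(wt x \<circ> U) summable_on P1 \<longleftrightarrow> h summable_on P1" by (rule summable_on_cong) (simp add: wU)
    then show ?thesis using a by simp
  qed
  have pU: "infsum h P1 = G x N (enat r) * G x (Suc r) M"
    using sU unfolding h_def P1_def G_def by (rule infsum_prod_mult)
  have pV: "c * infsum h P2 = c * (G x N (enat (r - 1)) * G x (r + 2) M)"
  proof (cases "c = 0")
    case False
    have a: "(wt x \<circ> V) summable_on P2" using summable_on_reindex[OF injV, THEN iffD1, OF s2] .
    have "(wt x \<circ> V) summable_on P2 \<longleftrightarrow> (\<lambda>p. c * h p) summable_on P2" by (rule summable_on_cong) (simp add: wV)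
    then have "(\<lambda>p. c * h p) summable_on P2" using a by simp
    then have "h summable_on P2" using summable_on_cmult_right'[OF False] by blast
    then have "infsum h P2 = G x N (enat (r - 1)) * G x (r + 2) M"
      unfolding h_def P2_def G_def by (rule infsum_prod_mult)
    then show ?thesis by simp
  qed simp
  have "G x N M = infsum (wt x) (U ` P1) + infsum (wt x) (V ` P2)"
    unfolding G_def spl by (rule infsum_Un_disjoint[OF s1 s2 disj])
  also have "\<dots> = G x N (enat r) * G x (Suc r) M + c * (G x N (enat (r - 1)) * G x (r + 2) M)"
    using eU eV pU pV by simp
  finally show ?thesis by (simp add: c_def algebra_simps)
qed


lemma G_empty:
  assumes "l \<le> N"
  shows "G x N (enat l) = 1"
proof -
  have "sp N (enat l) = {{}}" using assms by (auto simp: sp_def)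
  then show ?thesis by (simp add: G_def wt_def)
qed

lemma recF:
  assumes "N \<le> r" "Suc r \<le> l"
  shows "G x N (enat l) = G x N (enat r) * G x (Suc r) (enat l)
                 - x r * x (r + 1) * G x N (enat (r - 1)) * G x (r + 2) (enat l)"
  by (rule recG) (use assms sp_finite in auto)

lemma recF1:
  assumes "N \<le> Suc q"
  shows "G x N (enat (q + 2)) = G x N (enat (Suc q)) - x (Suc q) * x (Suc q + 1) * G x N (enat q)"
  using recF[of N "Suc q" "q + 2" x] assms by (simp add: G_empty)

lemma Dlemma:
  assumes p2: "2 \<le> p"
  shows "G x 1 (enat (p - 1 + d)) * G x p (enat (p + d)) - G x 1 (enat (p + d)) * G x p (enat (p - 1 + d))
         = (\<Prod>j=p-1..p-1+d. x j * x (j + 1)) * G x 1 (enat (p - 2))"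
proof (induction d)
  case 0
  have "G x 1 (enat p) = G x 1 (enat (p - 1)) * G x p (enat p)
          - x (p - 1) * x (p - 1 + 1) * G x 1 (enat (p - 1 - 1)) * G x (p - 1 + 2) (enat p)"
    using recF[of 1 "p - 1" p x] p2 by simp
  moreover have "G x p (enat p) = 1" "G x p (enat (p - 1)) = 1" "G x (p - 1 + 2) (enat p) = 1"
    by (auto intro: G_empty)
  moreover have "p - 1 - 1 = p - 2" "p - 1 + 1 = p" using p2 by auto
  ultimately show ?case by simp
next
  case (Suc d)
  define q where "q = p - 1 + d"
  have qq: "p + d = Suc q" "p - 1 + Suc d = Suc q" "p + Suc d = q + 2" using p2 by (auto simp: q_def)
  have r1: "G x 1 (enat (q + 2)) = G x 1 (enat (Suc q)) - x (Suc q) * x (Suc q + 1) * G x 1 (enat q)"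
    by (rule recF1) simp
  have r2: "G x p (enat (q + 2)) = G x p (enat (Suc q)) - x (Suc q) * x (Suc q + 1) * G x p (enat q)"
    by (rule recF1) (use p2 in \<open>simp add: q_def\<close>)
  have pr: "(\<Prod>j=p-1..Suc q. x j * x (j + 1)) = (\<Prod>j=p-1..q. x j * x (j + 1)) * (x (Suc q) * x (Suc q + 1))"
    by (subst prod.cl_ivl_Suc) (auto simp: q_def)
  have IH: "G x 1 (enat q) * G x p (enat (Suc q)) - G x 1 (enat (Suc q)) * G x p (enat q)
         = (\<Prod>j=p-1..q. x j * x (j + 1)) * G x 1 (enat (p - 2))"
    using Suc.IH unfolding q_def[symmetric] qq(1) .
  define a where "a = x (Suc q) * x (Suc q + 1)"
  have "G x 1 (enat (Suc q)) * (G x p (enat (Suc q)) - a * G x p (enat q))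
        - (G x 1 (enat (Suc q)) - a * G x 1 (enat q)) * G x p (enat (Suc q))
        = a * (G x 1 (enat q) * G x p (enat (Suc q)) - G x 1 (enat (Suc q)) * G x p (enat q))"
    by algebra
  then show ?case unfolding qq r1 r2 pr a_def[symmetric] using IH by simp
qed

lemma mainG:
  assumes p1: "1 < p" and pr: "p \<le> r + 1" and rM: "enat (Suc r) \<le> M"
    and sm: "\<And>N. wt x summable_on sp N M"
  shows "G x 1 (enat r) * G x p M - G x 1 M * G x p (enat r)
         = (\<Prod>j=p-1..r. x j * x (j + 1)) * G x 1 (enat (p - 2)) * G x (r + 2) M"
proof (cases "p = r + 1")
  case True
  have "G x 1 M = G x 1 (enat r) * G x (Suc r) M - x r * x (r + 1) * G x 1 (enat (r - 1)) * G x (r + 2) M"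
    by (rule recG[OF _ rM sm]) (use p1 True in simp)
  moreover have "G x p (enat r) = 1" using True by (simp add: G_empty)
  moreover have "p - 2 = r - 1" "p - 1 = r" using True by auto
  ultimately show ?thesis using True by (simp add: algebra_simps)
next
  case False
  then have pr': "p \<le> r" using pr by simp
  have e1: "G x 1 M = G x 1 (enat r) * G x (Suc r) M - x r * x (r + 1) * G x 1 (enat (r - 1)) * G x (r + 2) M"
    by (rule recG[OF _ rM sm]) (use p1 pr' in simp)
  have e2: "G x p M = G x p (enat r) * G x (Suc r) M - x r * x (r + 1) * G x p (enat (r - 1)) * G x (r + 2) M"
    by (rule recG[OF pr' rM sm])
  define d where "d = r - p"
  have D: "G x 1 (enat (r - 1)) * G x p (enat r) - G x 1 (enat r) * G x p (enat (r - 1))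
         = (\<Prod>j=p-1..r-1. x j * x (j + 1)) * G x 1 (enat (p - 2))"
  proof -
    have "p - 1 + d = r - 1" "p + d = r" using pr' p1 by (auto simp: d_def)
    then show ?thesis using Dlemma[of p x d] p1 by simp
  qed
  have P: "(\<Prod>j=p-1..r. x j * x (j + 1)) = (\<Prod>j=p-1..r-1. x j * x (j + 1)) * (x r * x (r + 1))"
  proof -
    have "r = Suc (r - 1)" using pr' p1 by simp
    then have "(\<Prod>j=p-1..r. x j * x (j + 1)) = (\<Prod>j=p-1..Suc (r-1). x j * x (j + 1))" by simp
    also have "\<dots> = (\<Prod>j=p-1..r-1. x j * x (j + 1)) * (x (Suc (r-1)) * x (Suc (r-1) + 1))"
      by (subst prod.cl_ivl_Suc) (use pr' p1 in auto)
    also have "Suc (r - 1) = r" using pr' p1 by simp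
    finally show ?thesis .
  qed
  define a where "a = x r * x (r + 1)"
  have "G x 1 (enat r) * (G x p (enat r) * G x (Suc r) M - a * G x p (enat (r - 1)) * G x (r + 2) M)
     - (G x 1 (enat r) * G x (Suc r) M - a * G x 1 (enat (r - 1)) * G x (r + 2) M) * G x p (enat r)
     = a * (G x 1 (enat (r - 1)) * G x p (enat r) - G x 1 (enat r) * G x p (enat (r - 1))) * G x (r + 2) M"
    by algebra
  then show ?thesis unfolding e1 e2 P D a_def[symmetric] by simp
qed

lemma frakF_G_fin: "frakF x N (enat l) = G x N (enat l)"
  unfolding G_def by (rule frakF_eq) (simp add: sp_finite)

lemma frakF_G_inf: "summable (\<lambda>k. norm (x k * x (k + 1))) \<Longrightarrow> frakF x N \<infinity> = G x N \<infinity>"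
  unfolding G_def by (rule frakF_eq) (rule wt_abs_summable)

theorem mainTheorem1:
  fixes x :: "nat \<Rightarrow> complex" and p r :: nat
  assumes "1 < p" and "p \<le> r + 1"
  shows "(\<forall>l::nat. r + 1 \<le> l \<longrightarrow>
           frakF x 1 (enat r) * frakF x p (enat l) - frakF x 1 (enat l) * frakF x p (enat r)
           = (\<Prod>j=p-1..r. x j * x (j + 1)) * frakF x 1 (enat (p - 2)) * frakF x (r + 2) (enat l))
       \<and> (summable (\<lambda>k. norm (x k * x (k + 1))) \<longrightarrow>
           frakF x 1 (enat r) * frakF x p \<infinity> - frakF x p (enat r) * frakF x 1 \<infinity>
           = (\<Prod>j=p-1..r. x j * x (j + 1)) * frakF x 1 (enat (p - 2)) * frakF x (r + 2) \<infinity>)"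
proof (intro conjI allI impI)
  fix l :: nat assume l: "r + 1 \<le> l"
  show "frakF x 1 (enat r) * frakF x p (enat l) - frakF x 1 (enat l) * frakF x p (enat r)
           = (\<Prod>j=p-1..r. x j * x (j + 1)) * frakF x 1 (enat (p - 2)) * frakF x (r + 2) (enat l)"
    unfolding frakF_G_fin
    by (rule mainG) (use assms l sp_finite in auto)
next
  assume sm: "summable (\<lambda>k. norm (x k * x (k + 1)))"
  have "G x 1 (enat r) * G x p \<infinity> - G x 1 \<infinity> * G x p (enat r)
         = (\<Prod>j=p-1..r. x j * x (j + 1)) * G x 1 (enat (p - 2)) * G x (r + 2) \<infinity>"
    by (rule mainG) (use assms wt_abs_summable[OF sm] in auto)
  then show "frakF x 1 (enat r) * frakF x p \<infinity> - frakF x p (enat r) * frakF x 1 \<infinity>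
           = (\<Prod>j=p-1..r. x j * x (j + 1)) * frakF x 1 (enat (p - 2)) * frakF x (r + 2) \<infinity>"
    unfolding frakF_G_fin frakF_G_inf[OF sm] by (simp add: mult.commute)
qed

end
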